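(* Let $\mathbf{w}_1,\dots,\mathbf{w}_6:\mathbb{R}\to\mathbb{R}^7$ be differentiable functions satisfying $\frac{d\mathbf{w}_1}{dt}=2\mathbf{w}_2\times\mathbf{w}_3$, $\frac{d\mathbf{w}_2}{dt}=2\mathbf{w}_1\times\mathbf{w}_3$, $\frac{d\mathbf{w}_3}{dt}=-2\mathbf{w}_1\times\mathbf{w}_2$, $\frac{d\mathbf{w}_4}{dt}=\mathbf{w}_1\times\mathbf{w}_5+\mathbf{w}_2\times\mathbf{w}_5-\mathbf{w}_3\times\mathbf{w}_4$, $\frac{d\mathbf{w}_5}{dt}=-\mathbf{w}_1\times\mathbf{w}_4+\mathbf{w}_2\times\mathbf{w}_4+\mathbf{w}_3\times\mathbf{w}_5$, $\frac{d\mathbf{w}_6}{dt}=\mathbf{w}_4\times\mathbf{w}_5$, and define $F:\mathbb{R}^3\to\mathbb{R}^7$ by $F(y_1,y_2,t)=\tfrac12(y_1^2+y_2^2)\mathbf{w}_1(t)+\tfrac12(y_1^2-y_2^2)\mathbf{w}_2(t)+y_1y_2\mathbf{w}_3(t)+y_1\mathbf{w}_4(t)+y_2\mathbf{w}_5(t)+\mathbf{w}_6(t)$. Then $\frac{\partial F}{\partial y_1}\times\frac{\partial F}{\partial y_2}=\frac{\partial F}{\partial t}$ everywhere, and $dF$ is injective at a point $(y_1,y_2,t)$ if and only if $\frac{\partial F}{\partial y_1}$ and $\frac{\partial F}{\partial y_2}$ are linearly independent there. In particular $F$ is an immersion at $(0,0,0)$ if and only if $\mathbf{w}_4(0)$ and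 $\mathbf{w}_5(0)$ are linearly independent.
   Context: Let $(x_1,\dots,x_7)$ be coordinates on $\mathbb{R}^7$ with Euclidean metric $g$, and write $dx_{ijk}=dx_i\wedge dx_j\wedge dx_k$. Define $\varphi=dx_{123}+dx_{145}+dx_{167}+dx_{246}-dx_{257}-dx_{347}-dx_{356}$. The cross product $\times$ on $\mathbb{R}^7$ is defined by $g(u\times v,w)=\varphi(u,v,w)$ for all $u,v,w\in\mathbb{R}^7$. *)

theory Defs
  imports "HOL-Analysis.Analysis"
begin

text \<open>Vectors of R^7 are real^7; coordinates x_1,...,x_7 are x$1,...,x$7
  (in the numeral type 7, the literal 7 denotes the remaining seventh index).\<close>

definition dx3 :: "7 \<Rightarrow> 7 \<Rightarrow> 7 \<Rightarrow> real^7 \<Rightarrow> real^7 \<Rightarrow> real^7 \<Rightarrow> real" where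
  "dx3 i j k u v w =
     u$i * (v$j * w$k - v$k * w$j) - u$j * (v$i * w$k - v$k * w$i)
     + u$k * (v$i * w$j - v$j * w$i)"

definition phi7 :: "real^7 \<Rightarrow> real^7 \<Rightarrow> real^7 \<Rightarrow> real" where
  "phi7 u v w = dx3 1 2 3 u v w + dx3 1 4 5 u v w + dx3 1 6 7 u v w + dx3 2 4 6 u v w
      - dx3 2 5 7 u v w - dx3 3 4 7 u v w - dx3 3 5 6 u v w"

definition cross7 :: "real^7 \<Rightarrow> real^7 \<Rightarrow> real^7" where
  "cross7 u v = (THE z. \<forall>w. z \<bullet> w = phi7 u v w)"

definition Fmap :: "(real \<Rightarrow> real^7) \<Rightarrow> (real \<Rightarrow> real^7) \<Rightarrow> (real \<Rightarrow> real^7) \<Rightarrow>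
    (real \<Rightarrow> real^7) \<Rightarrow> (real \<Rightarrow> real^7) \<Rightarrow> (real \<Rightarrow> real^7) \<Rightarrow> real \<times> real \<times> real \<Rightarrow> real^7" where
  "Fmap w1 w2 w3 w4 w5 w6 = (\<lambda>(y1, y2, t).
      (1/2 * (y1^2 + y2^2)) *\<^sub>R w1 t + (1/2 * (y1^2 - y2^2)) *\<^sub>R w2 t + (y1 * y2) *\<^sub>R w3 t
      + y1 *\<^sub>R w4 t + y2 *\<^sub>R w5 t + w6 t)"

definition lin_indep2 :: "real^7 \<Rightarrow> real^7 \<Rightarrow> bool" where
  "lin_indep2 a b \<longleftrightarrow> (\<forall>c d::real. c *\<^sub>R a + d *\<^sub>R b = 0 \<longrightarrow> c = 0 \<and> d = 0)"

end

theory Submission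
  imports Defs
begin

lemma exhaust_7:
  fixes x :: 7
  shows "x = 1 \<or> x = 2 \<or> x = 3 \<or> x = 4 \<or> x = 5 \<or> x = 6 \<or> x = 7"
proof (induct x)
  case (of_int z)
  then have "z = 0 \<or> z = 1 \<or> z = 2 \<or> z = 3 \<or> z = 4 \<or> z = 5 \<or> z = 6" by fastforce
  then show ?case by auto
qed

lemma UNIV_7: "UNIV = {1,2,3,4,5,6,7::7}" using exhaust_7 by auto

lemma sum_7: "sum f (UNIV::7 set) = f 1 + f 2 + f 3 + f 4 + f 5 + f 6 + f 7"
  unfolding UNIV_7 by (simp add: ac_simps)

lemma forall_7: "(\<forall>i::7. P i) \<longleftrightarrow> P 1 \<and> P 2 \<and> P 3 \<and> P 4 \<and> P 5 \<and> P 6 \<and> P 7"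
  by (metis exhaust_7)

definition c7 :: "real^7 \<Rightarrow> real^7 \<Rightarrow> real^7" where
  "c7 u v = (\<chi> i. if i = 1 then (u$2 * v$3 - u$3 * v$2) + (u$4 * v$5 - u$5 * v$4) + (u$6 * v$7 - u$7 * v$6)
   else if i = 2 then (u$3 * v$1 - u$1 * v$3) + (u$4 * v$6 - u$6 * v$4) - (u$5 * v$7 - u$7 * v$5)
   else if i = 3 then (u$1 * v$2 - u$2 * v$1) - (u$4 * v$7 - u$7 * v$4) - (u$5 * v$6 - u$6 * v$5)
   else if i = 4 then (u$5 * v$1 - u$1 * v$5) + (u$6 * v$2 - u$2 * v$6) - (u$7 * v$3 - u$3 * v$7)
   else if i = 5 then (u$1 * v$4 - u$4 * v$1) - (u$7 * v$2 - u$2 * v$7) - (u$6 * v$3 - u$3 * v$6)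
   else if i = 6 then (u$7 * v$1 - u$1 * v$7) + (u$2 * v$4 - u$4 * v$2) - (u$3 * v$5 - u$5 * v$3)
   else (u$1 * v$6 - u$6 * v$1) - (u$2 * v$5 - u$5 * v$2) - (u$3 * v$4 - u$4 * v$3))"

lemma c7_comps:
  "c7 u v $ 1 = (u$2 * v$3 - u$3 * v$2) + (u$4 * v$5 - u$5 * v$4) + (u$6 * v$7 - u$7 * v$6)"
  "c7 u v $ 2 = (u$3 * v$1 - u$1 * v$3) + (u$4 * v$6 - u$6 * v$4) - (u$5 * v$7 - u$7 * v$5)"
  "c7 u v $ 3 = (u$1 * v$2 - u$2 * v$1) - (u$4 * v$7 - u$7 * v$4) - (u$5 * v$6 - u$6 * v$5)"
  "c7 u v $ 4 = (u$5 * v$1 - u$1 * v$5) + (u$6 * v$2 - u$2 * v$6) - (u$7 * v$3 - u$3 * v$7)"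
  "c7 u v $ 5 = (u$1 * v$4 - u$4 * v$1) - (u$7 * v$2 - u$2 * v$7) - (u$6 * v$3 - u$3 * v$6)"
  "c7 u v $ 6 = (u$7 * v$1 - u$1 * v$7) + (u$2 * v$4 - u$4 * v$2) - (u$3 * v$5 - u$5 * v$3)"
  "c7 u v $ 7 = (u$1 * v$6 - u$6 * v$1) - (u$2 * v$5 - u$5 * v$2) - (u$3 * v$4 - u$4 * v$3)"
  by (simp_all add: c7_def)

lemma c7_inner: "c7 u v \<bullet> w = phi7 u v w"
  unfolding inner_vec_def sum_7 c7_comps phi7_def dx3_def
  by (simp add: algebra_simps)

lemma cross7_c7: "cross7 u v = c7 u v"
  unfolding cross7_def
proof (rule the_equality)
  show "\<forall>w. c7 u v \<bullet> w = phi7 u v w" by (simp add: c7_inner)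
next
  fix z assume z: "\<forall>w. z \<bullet> w = phi7 u v w"
  have "(z - c7 u v) \<bullet> (z - c7 u v) = 0"
    by (simp add: inner_diff_left z c7_inner)
  then show "z = c7 u v" by simp
qed

lemmas cross_comps = c7_comps[folded cross7_c7]

lemma cross7_add_left: "cross7 (a + b) c = cross7 a c + cross7 b c"
  by (simp add: vec_eq_iff forall_7 cross_comps algebra_simps)
lemma cross7_add_right: "cross7 c (a + b) = cross7 c a + cross7 c b"
  by (simp add: vec_eq_iff forall_7 cross_comps algebra_simps)
lemma cross7_scale_left: "cross7 (r *\<^sub>R a) c = r *\<^sub>R cross7 a c"
  by (simp add: vec_eq_iff forall_7 cross_comps algebra_simps)
lemma cross7_scale_right: "cross7 c (r *\<^sub>R a) = r *\<^sub>R cross7 c a"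
  by (simp add: vec_eq_iff forall_7 cross_comps algebra_simps)
lemma cross7_self: "cross7 a a = 0"
  by (simp add: vec_eq_iff forall_7 cross_comps algebra_simps)
lemma cross7_anti: "cross7 b a = - cross7 a b"
  by (simp add: vec_eq_iff forall_7 cross_comps algebra_simps)
lemma cross7_orth1: "cross7 a b \<bullet> a = 0"
  by (simp add: inner_vec_def sum_7 cross_comps algebra_simps)
lemma cross7_orth2: "cross7 a b \<bullet> b = 0"
  by (simp add: inner_vec_def sum_7 cross_comps algebra_simps)
lemma cross7_norm: "cross7 a b \<bullet> cross7 a b = (a \<bullet> a) * (b \<bullet> b) - (a \<bullet> b)^2"
  by (simp add: inner_vec_def sum_7 cross_comps algebra_simps power2_eq_square)


lemma comp_vd:
  assumes "(w has_vector_derivative a) (at t)"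
  shows "((\<lambda>p::real\<times>real\<times>real. w (snd (snd p))) has_derivative (\<lambda>h. snd (snd h) *\<^sub>R a)) (at (y1, y2, t))"
proof -
  have "((w \<circ> (\<lambda>p::real\<times>real\<times>real. snd (snd p))) has_derivative ((\<lambda>x. x *\<^sub>R a) \<circ> (\<lambda>h. snd (snd h)))) (at (y1, y2, t))"
    apply (rule diff_chain_at)
     apply (rule derivative_eq_intros | simp)+
    using assms unfolding has_vector_derivative_def by simp
  then show ?thesis by (simp add: o_def)
qed

lemma Fmap_deriv:
  fixes y1 y2 :: real
  assumes a1: "(w1 has_vector_derivative a1) (at t)"
      and a2: "(w2 has_vector_derivative a2) (at t)"
      and a3: "(w3 has_vector_derivative a3) (at t)"
      and a4: "(w4 has_vector_derivative a4) (at t)"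
      and a5: "(w5 has_vector_derivative a5) (at t)"
      and a6: "(w6 has_vector_derivative a6) (at t)"
  defines "D1 \<equiv> y1 *\<^sub>R w1 t + y1 *\<^sub>R w2 t + y2 *\<^sub>R w3 t + w4 t"
      and "D2 \<equiv> y2 *\<^sub>R w1 t - y2 *\<^sub>R w2 t + y1 *\<^sub>R w3 t + w5 t"
      and "D3 \<equiv> (1/2 * (y1^2 + y2^2)) *\<^sub>R a1 + (1/2 * (y1^2 - y2^2)) *\<^sub>R a2 + (y1 * y2) *\<^sub>R a3
                + y1 *\<^sub>R a4 + y2 *\<^sub>R a5 + a6"
  shows "(Fmap w1 w2 w3 w4 w5 w6 has_derivative (\<lambda>h. fst h *\<^sub>R D1 + fst (snd h) *\<^sub>R D2 + snd (snd h) *\<^sub>R D3)) (at (y1, y2, t))"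
proof -
  have e: "Fmap w1 w2 w3 w4 w5 w6 = (\<lambda>p. (1/2 * (fst p^2 + fst (snd p)^2)) *\<^sub>R w1 (snd (snd p))
      + (1/2 * (fst p^2 - fst (snd p)^2)) *\<^sub>R w2 (snd (snd p)) + (fst p * fst (snd p)) *\<^sub>R w3 (snd (snd p))
      + fst p *\<^sub>R w4 (snd (snd p)) + fst (snd p) *\<^sub>R w5 (snd (snd p)) + w6 (snd (snd p)))"
    by (auto simp: Fmap_def)
  show ?thesis
    unfolding e
    apply (rule has_derivative_eq_rhs)
     apply (rule derivative_eq_intros comp_vd[OF a1] comp_vd[OF a2] comp_vd[OF a3] comp_vd[OF a4]
        comp_vd[OF a5] comp_vd[OF a6] | simp)+
    apply (rule ext)
    apply (simp add: D1_def D2_def D3_def algebra_simps add_divide_distrib diff_divide_distrib power2_eq_square)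
    done
qed


lemma cross7_nz: assumes "lin_indep2 a b" shows "cross7 a b \<noteq> 0"
proof
  assume c: "cross7 a b = 0"
  have "(a \<bullet> a) * (b \<bullet> b) - (a \<bullet> b)^2 = 0" using cross7_norm[of a b] c by simp
  then have "(a \<bullet> b)^2 = (norm a * norm b)^2"
    by (simp add: power_mult_distrib power2_norm_eq_inner)
  then have "\<bar>a \<bullet> b\<bar> = norm a * norm b"
    by (metis abs_of_nonneg norm_ge_zero power2_eq_iff_nonneg abs_ge_zero zero_le_mult_iff power2_abs)
  then have h: "norm a *\<^sub>R b = norm b *\<^sub>R a \<or> norm a *\<^sub>R b = - norm b *\<^sub>R a"
    using norm_cauchy_schwarz_abs_eq by blast
  show False
  proof (cases "a = 0")
    case True
    then show False using assms[unfolded lin_indep2_def, rule_format, of 1 0] by simp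
  next
    case False
    then have na: "norm a \<noteq> 0" by simp
    from h show False
    proof
      assume "norm a *\<^sub>R b = norm b *\<^sub>R a"
      then have "(- norm b) *\<^sub>R a + norm a *\<^sub>R b = 0" by simp
      then show False using assms[unfolded lin_indep2_def] na by blast
    next
      assume "norm a *\<^sub>R b = - norm b *\<^sub>R a"
      then have "(norm b) *\<^sub>R a + norm a *\<^sub>R b = 0" by simp
      then show False using assms[unfolded lin_indep2_def] na by blast
    qed
  qed
qed

lemma inj_iff:
  "inj (\<lambda>h::real\<times>real\<times>real. fst h *\<^sub>R a + fst (snd h) *\<^sub>R b + snd (snd h) *\<^sub>R cross7 a b)
    \<longleftrightarrow> lin_indep2 a b"
proof
  assume i: "inj (\<lambda>h::real\<times>real\<times>real. fst h *\<^sub>R a + fst (snd h) *\<^sub>R b + snd (snd h) *\<^sub>R cross7 a b)"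
  show "lin_indep2 a b"
    unfolding lin_indep2_def
  proof (intro allI impI)
    fix c d :: real assume "c *\<^sub>R a + d *\<^sub>R b = 0"
    then have "(c, d, 0::real) = (0, 0, 0)" using injD[OF i, of "(c,d,0)" "(0,0,0)"] by simp
    then show "c = 0 \<and> d = 0" by simp
  qed
next
  assume li: "lin_indep2 a b"
  have nz: "cross7 a b \<bullet> cross7 a b \<noteq> 0" using cross7_nz[OF li] by simp
  show "inj (\<lambda>h::real\<times>real\<times>real. fst h *\<^sub>R a + fst (snd h) *\<^sub>R b + snd (snd h) *\<^sub>R cross7 a b)"
  proof (rule injI)
    fix x y :: "real\<times>real\<times>real"
    assume e: "fst x *\<^sub>R a + fst (snd x) *\<^sub>R b + snd (snd x) *\<^sub>R cross7 a b =
       fst y *\<^sub>R a + fst (snd y) *\<^sub>R b + snd (snd y) *\<^sub>R cross7 a b"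
    obtain x1 x2 x3 where x: "x = (x1, x2, x3)" by (cases x) auto
    obtain y1 y2 y3 where y: "y = (y1, y2, y3)" by (cases y) auto
    have e2: "(x1 - y1) *\<^sub>R a + (x2 - y2) *\<^sub>R b + (x3 - y3) *\<^sub>R cross7 a b = 0"
      using e unfolding x y by (simp add: algebra_simps)
    have "((x1 - y1) *\<^sub>R a + (x2 - y2) *\<^sub>R b + (x3 - y3) *\<^sub>R cross7 a b) \<bullet> cross7 a b = 0"
      using e2 by simp
    moreover have o1: "a \<bullet> cross7 a b = 0" by (metis cross7_orth1 inner_commute)
    moreover have o2: "b \<bullet> cross7 a b = 0" by (metis cross7_orth2 inner_commute)
    ultimately have "(x3 - y3) * (cross7 a b \<bullet> cross7 a b) = 0"
      by (simp only: inner_add_left inner_scaleR_left o1 o2 mult_zero_right add_0_left)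
    then have "x3 = y3" using nz by simp
    then have "(x1 - y1) *\<^sub>R a + (x2 - y2) *\<^sub>R b = 0" using e2 by simp
    then have "x1 - y1 = 0 \<and> x2 - y2 = 0" using li unfolding lin_indep2_def by blast
    then show "x = y" using x y \<open>x3 = y3\<close> by simp
  qed
qed


lemma key_ident:
  fixes y1 y2 :: real
  shows "cross7 (y1 *\<^sub>R w1 + y1 *\<^sub>R w2 + y2 *\<^sub>R w3 + w4) (y2 *\<^sub>R w1 - y2 *\<^sub>R w2 + y1 *\<^sub>R w3 + w5)
    = (1/2 * (y1^2 + y2^2)) *\<^sub>R (2 *\<^sub>R cross7 w2 w3) + (1/2 * (y1^2 - y2^2)) *\<^sub>R (2 *\<^sub>R cross7 w1 w3)
      + (y1 * y2) *\<^sub>R (- 2 *\<^sub>R cross7 w1 w2)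
      + y1 *\<^sub>R (cross7 w1 w5 + cross7 w2 w5 - cross7 w3 w4)
      + y2 *\<^sub>R (- cross7 w1 w4 + cross7 w2 w4 + cross7 w3 w5) + cross7 w4 w5"
  by (simp add: vec_eq_iff forall_7 cross_comps algebra_simps power2_eq_square)




theorem mainTheorem5:
  fixes w1 w2 w3 w4 w5 w6 :: "real \<Rightarrow> real^7"
  assumes d1: "\<And>t. (w1 has_vector_derivative 2 *\<^sub>R cross7 (w2 t) (w3 t)) (at t)"
      and d2: "\<And>t. (w2 has_vector_derivative 2 *\<^sub>R cross7 (w1 t) (w3 t)) (at t)"
      and d3: "\<And>t. (w3 has_vector_derivative - 2 *\<^sub>R cross7 (w1 t) (w2 t)) (at t)"
      and d4: "\<And>t. (w4 has_vector_derivative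
                 cross7 (w1 t) (w5 t) + cross7 (w2 t) (w5 t) - cross7 (w3 t) (w4 t)) (at t)"
      and d5: "\<And>t. (w5 has_vector_derivative
                 - cross7 (w1 t) (w4 t) + cross7 (w2 t) (w4 t) + cross7 (w3 t) (w5 t)) (at t)"
      and d6: "\<And>t. (w6 has_vector_derivative cross7 (w4 t) (w5 t)) (at t)"
  shows "(\<forall>y1 y2 t. \<exists>F' D1 D2 D3.
            (Fmap w1 w2 w3 w4 w5 w6 has_derivative F') (at (y1, y2, t))
          \<and> ((\<lambda>s. Fmap w1 w2 w3 w4 w5 w6 (s, y2, t)) has_vector_derivative D1) (at y1)
          \<and> ((\<lambda>s. Fmap w1 w2 w3 w4 w5 w6 (y1, s, t)) has_vector_derivative D2) (at y2)
          \<and> ((\<lambda>s. Fmap w1 w2 w3 w4 w5 w6 (y1, y2, s)) has_vector_derivative D3) (at t)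
          \<and> cross7 D1 D2 = D3
          \<and> (inj F' \<longleftrightarrow> lin_indep2 D1 D2))
       \<and> (\<forall>F'. (Fmap w1 w2 w3 w4 w5 w6 has_derivative F') (at (0, 0, 0))
            \<longrightarrow> (inj F' \<longleftrightarrow> lin_indep2 (w4 0) (w5 0)))"
proof -
  let ?F = "Fmap w1 w2 w3 w4 w5 w6"
  have main: "(?F has_derivative (\<lambda>h. fst h *\<^sub>R D1 + fst (snd h) *\<^sub>R D2 + snd (snd h) *\<^sub>R cross7 D1 D2)) (at (y1, y2, t))"
    if "D1 = y1 *\<^sub>R w1 t + y1 *\<^sub>R w2 t + y2 *\<^sub>R w3 t + w4 t"
       "D2 = y2 *\<^sub>R w1 t - y2 *\<^sub>R w2 t + y1 *\<^sub>R w3 t + w5 t" for y1 y2 t D1 D2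
    using Fmap_deriv[OF d1 d2 d3 d4 d5 d6, where ?y1.0=y1 and ?y2.0=y2] unfolding that key_ident .
  show ?thesis
  proof (intro conjI allI impI)
    fix y1 y2 t
    define D1 where "D1 = y1 *\<^sub>R w1 t + y1 *\<^sub>R w2 t + y2 *\<^sub>R w3 t + w4 t"
    define D2 where "D2 = y2 *\<^sub>R w1 t - y2 *\<^sub>R w2 t + y1 *\<^sub>R w3 t + w5 t"
    define F' where "F' = (\<lambda>h::real\<times>real\<times>real. fst h *\<^sub>R D1 + fst (snd h) *\<^sub>R D2 + snd (snd h) *\<^sub>R cross7 D1 D2)"
    have dF: "(?F has_derivative F') (at (y1, y2, t))" unfolding F'_def by (rule main[OF D1_def D2_def])
    have p1: "((\<lambda>s. ?F (s, y2, t)) has_vector_derivative D1) (at y1)"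
    proof -
      have "((?F \<circ> (\<lambda>s. (s, y2, t))) has_derivative (F' \<circ> (\<lambda>h. (h, 0, 0)))) (at y1)"
        by (rule diff_chain_at, (rule derivative_eq_intros | simp add: dF)+)
      then show ?thesis unfolding has_vector_derivative_def by (simp add: o_def F'_def)
    qed
    have p2: "((\<lambda>s. ?F (y1, s, t)) has_vector_derivative D2) (at y2)"
    proof -
      have "((?F \<circ> (\<lambda>s. (y1, s, t))) has_derivative (F' \<circ> (\<lambda>h. (0, h, 0)))) (at y2)"
        by (rule diff_chain_at, (rule derivative_eq_intros | simp add: dF)+)
      then show ?thesis unfolding has_vector_derivative_def by (simp add: o_def F'_def)
    qed
    have p3: "((\<lambda>s. ?F (y1, y2, s)) has_vector_derivative cross7 D1 D2) (at t)"
    proof -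
      have "((?F \<circ> (\<lambda>s. (y1, y2, s))) has_derivative (F' \<circ> (\<lambda>h. (0, 0, h)))) (at t)"
        by (rule diff_chain_at, (rule derivative_eq_intros | simp add: dF)+)
      then show ?thesis unfolding has_vector_derivative_def by (simp add: o_def F'_def)
    qed
    show "\<exists>F' D1 D2 D3.
            (?F has_derivative F') (at (y1, y2, t))
          \<and> ((\<lambda>s. ?F (s, y2, t)) has_vector_derivative D1) (at y1)
          \<and> ((\<lambda>s. ?F (y1, s, t)) has_vector_derivative D2) (at y2)
          \<and> ((\<lambda>s. ?F (y1, y2, s)) has_vector_derivative D3) (at t)
          \<and> cross7 D1 D2 = D3
          \<and> (inj F' \<longleftrightarrow> lin_indep2 D1 D2)"
      using dF p1 p2 p3 inj_iff[of D1 D2] unfolding F'_def by blast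
  next
    fix F' assume h: "(?F has_derivative F') (at (0, 0, 0))"
    have m: "(?F has_derivative (\<lambda>h. fst h *\<^sub>R w4 0 + fst (snd h) *\<^sub>R w5 0 + snd (snd h) *\<^sub>R cross7 (w4 0) (w5 0))) (at (0, 0, 0))"
      using main[of "w4 0" 0 0 0 "w5 0"] by simp
    have "F' = (\<lambda>h. fst h *\<^sub>R w4 0 + fst (snd h) *\<^sub>R w5 0 + snd (snd h) *\<^sub>R cross7 (w4 0) (w5 0))"
      using has_derivative_unique[OF h m] .
    then show "inj F' \<longleftrightarrow> lin_indep2 (w4 0) (w5 0)" using inj_iff by simp
  qed
qed

end
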